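(* Let $n\ge3$, $k\ge0$, let $R$ be a maximal reversible set in $G_n^k$, and let $x_1,x_2,\dots,x_{k+1}$ be a consistent labeling of $A(R)$. Then for each $i\in\{1,\dots,k+1\}$, $|B(x_i,R)|\le k+2-i$.
   Context: For integers $n\ge3$, $k\ge0$, the crown $S_n^k$ is the poset with ground set $A\cup B$, $A=\{a_1,\dots,a_{n+k}\}$, $B=\{b_1,\dots,b_{n+k}\}$, indices cyclic modulo $n+k$; elements of $A$ are pairwise incomparable, as are elements of $B$, and $a_i$ is incomparable to $b_j$ when $j\in\{i,\dots,i+k\}$ (mod $n+k$), while $a_i<b_j$ otherwise. $\mathrm{Inc}(A,B)$ is the set of pairs $(a,b)\in A\times B$ with $a$ incomparable to $b$; $G_n^k$ has vertex set $\mathrm{Inc}(A,B)$, with $(a,b)$ adjacent to $(x,y)$ iff $a<y$ and $x<b$. A set $R\subseteq\mathrm{Inc}(A,B)$ is reversible if some linear extension $L$ of $S_n^k$ has $b<a$ in $L$ for all $(a,b)\in R$; maximal reversible means maximal under inclusion among reversible sets. For $R\subseteq\mathrm{Inc}(A,B)$ and $a\in A$, $B(a,R)=\{b\in B:(a,b)\in R\}$, and $A(R)=\{a\in A: B(a,R)\ne\emptyset\}$. For a maximal reversible set $R$ one has $|A(R)|=k+1$, and the sets $B(a,R)$, $a\in A(R)$, form a chain under inclusion. A consistent labeling of $A(R)$ is a labeling $A(R)=\{x_1,\dots,x_{k+1}\}$ such that $B(x_\beta,R)\subseteq B(x_\alpha,R)$ whenever $\alpha<\beta$. *)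

theory Defs
  imports Main
begin

text \<open>Elements of the crown S_n^k: A-elements a_i and B-elements b_j, indices in {0..<n+k}
  (cyclic modulo n+k).\<close>
datatype elt = Aelt nat | Belt nat

definition ground :: "nat \<Rightarrow> nat \<Rightarrow> elt set" where
  "ground n k = {Aelt i | i. i < n + k} \<union> {Belt j | j. j < n + k}"

definition crown_inc :: "nat \<Rightarrow> nat \<Rightarrow> nat \<Rightarrow> nat \<Rightarrow> bool" where
  "crown_inc n k i j \<longleftrightarrow> (j + (n + k) - i) mod (n + k) \<le> k"

definition crown_less :: "nat \<Rightarrow> nat \<Rightarrow> elt \<Rightarrow> elt \<Rightarrow> bool" where
  "crown_less n k x y \<longleftrightarrow>
     (\<exists>i j. x = Aelt i \<and> y = Belt j \<and> i < n + k \<and> j < n + k \<and> \<not> crown_inc n k i j)"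

definition Inc :: "nat \<Rightarrow> nat \<Rightarrow> (elt \<times> elt) set" where
  "Inc n k = {(Aelt i, Belt j) | i j. i < n + k \<and> j < n + k \<and> crown_inc n k i j}"

definition linear_extension :: "nat \<Rightarrow> nat \<Rightarrow> (elt \<times> elt) set \<Rightarrow> bool" where
  "linear_extension n k L \<longleftrightarrow>
     L \<subseteq> ground n k \<times> ground n k \<and> irrefl L \<and> trans L \<and> total_on (ground n k) L \<and>
     (\<forall>x y. crown_less n k x y \<longrightarrow> (x, y) \<in> L)"

definition reversible :: "nat \<Rightarrow> nat \<Rightarrow> (elt \<times> elt) set \<Rightarrow> bool" where
  "reversible n k R \<longleftrightarrow> R \<subseteq> Inc n k \<and>
     (\<exists>L. linear_extension n k L \<and> (\<forall>(a, b) \<in> R. (b, a) \<in> L))"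

definition maximal_reversible :: "nat \<Rightarrow> nat \<Rightarrow> (elt \<times> elt) set \<Rightarrow> bool" where
  "maximal_reversible n k R \<longleftrightarrow> reversible n k R \<and>
     (\<forall>R'. reversible n k R' \<and> R \<subseteq> R' \<longrightarrow> R' = R)"

definition Bset :: "elt \<Rightarrow> (elt \<times> elt) set \<Rightarrow> elt set" where
  "Bset a R = {b. (a, b) \<in> R}"

definition Aset :: "nat \<Rightarrow> nat \<Rightarrow> (elt \<times> elt) set \<Rightarrow> elt set" where
  "Aset n k R = {Aelt i | i. i < n + k \<and> Bset (Aelt i) R \<noteq> {}}"

definition consistent_labeling :: "nat \<Rightarrow> nat \<Rightarrow> (elt \<times> elt) set \<Rightarrow> (nat \<Rightarrow> elt) \<Rightarrow> bool" where
  "consistent_labeling n k R x \<longleftrightarrow> bij_betw x {1..k+1} (Aset n k R) \<and>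
     (\<forall>\<alpha>\<in>{1..k+1}. \<forall>\<beta>\<in>{1..k+1}. \<alpha> < \<beta> \<longrightarrow> Bset (x \<beta>) R \<subseteq> Bset (x \<alpha>) R)"

end

theory Submission
  imports Defs
begin

lemma int_mod_aux: "((a::int) mod c + c - b mod c) mod c = (a + c - b) mod c"
  by (metis add_diff_eq diff_add_eq mod_add_left_eq mod_diff_eq mod_diff_right_eq)

lemma rot_inv:
  fixes N p j q :: nat
  assumes "p < N" "j < N" "q < N"
  shows "((j + N - q) mod N + N - (p + N - q) mod N) mod N = (j + N - p) mod N"
proof -
  have N0: "N > 0" using assms by auto
  have h1: "(p + N - q) mod N < N" using N0 by simp
  have "int (((j + N - q) mod N + N - (p + N - q) mod N) mod N)
     = (int ((j + N - q) mod N) + int N - int ((p + N - q) mod N)) mod int N"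
    using h1 by (simp add: of_nat_mod of_nat_diff)
  also have "\<dots> = ((int j + int N - int q) mod int N + int N - (int p + int N - int q) mod int N) mod int N"
    using assms by (simp add: of_nat_mod of_nat_diff)
  also have "\<dots> = ((int j + int N - int q) + int N - (int p + int N - int q)) mod int N"
    by (rule int_mod_aux)
  also have "\<dots> = (int j + int N - int p) mod int N"
    by (simp add: algebra_simps)
  also have "\<dots> = int ((j + N - p) mod N)"
    using assms by (simp add: of_nat_mod of_nat_diff)
  finally show ?thesis by linarith
qed

lemma mod_window: "(x::nat) < 2 * N \<Longrightarrow> x mod N = (if x < N then x else x - N)"
  by (simp add: le_mod_geq)

lemma key1:
  fixes N k :: nat and S T :: "nat set"
  assumes kN: "k + 2 \<le> N" and SN: "S \<subseteq> {..<N}" and TN: "T \<subseteq> {..<N}"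
    and Sne: "S \<noteq> {}" and kT: "k \<in> T"
    and inc: "\<forall>p\<in>S. \<forall>j\<in>T. (j + N - p) mod N \<le> k"
  shows "card S + card T \<le> k + 2"
proof -
  have Sk: "S \<subseteq> {..k}"
  proof
    fix p assume pS: "p \<in> S"
    have "(k + N - p) mod N \<le> k" using inc pS kT by blast
    moreover have "p < N" using pS SN by auto
    ultimately show "p \<in> {..k}"
      by (cases "p \<le> k") (auto simp: mod_less)
  qed
  have finS: "finite S" using Sk finite_subset by blast
  define M where "M = Max S"
  have MS: "M \<in> S" using finS Sne M_def by simp
  have Mk: "M \<le> k" using MS Sk by auto
  have leM: "\<And>s. s \<in> S \<Longrightarrow> s \<le> M" using finS M_def by simp
  define X where "X = (\<lambda>s. s + k + 1) ` S \<union> {M + k + 2 .. M + N - 1}"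
  define W where "W = (\<lambda>x. x mod N) ` X"
  have Xwin: "X \<subseteq> {k+1..<k+1+N}"
    using Mk leM kN unfolding X_def by fastforce
  have injm: "inj_on (\<lambda>x. x mod N) {k+1..<k+1+N}"
  proof (rule inj_onI)
    fix x y assume "x \<in> {k+1..<k+1+N}" "y \<in> {k+1..<k+1+N}" "x mod N = y mod N"
    then show "x = y" using kN mod_window[of x N] mod_window[of y N]
      by (auto split: if_splits)
  qed
  have cardX: "card X = card S + (N - k - 2)"
  proof -
    have disj: "(\<lambda>s. s + k + 1) ` S \<inter> {M + k + 2 .. M + N - 1} = {}"
      using leM by fastforce
    have "card ((\<lambda>s. s + k + 1) ` S) = card S"
      by (rule card_image) (auto simp: inj_on_def)
    moreover have "card {M + k + 2 .. M + N - 1} = N - k - 2" using kN by simp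
    ultimately show ?thesis unfolding X_def using disj finS
      by (simp add: card_Un_disjoint)
  qed
  have cardW: "card W = card X"
    unfolding W_def by (rule card_image) (rule inj_on_subset[OF injm Xwin])
  have WN: "W \<subseteq> {..<N}" unfolding W_def using kN by auto
  have WT: "W \<inter> T = {}"
  proof (rule ccontr)
    assume "W \<inter> T \<noteq> {}"
    then obtain x where xX: "x \<in> X" and wT: "x mod N \<in> T" unfolding W_def by auto
    have "\<exists>s\<in>S. s + k + 1 \<le> x \<and> x \<le> s + N - 1"
    proof (cases "x \<in> (\<lambda>s. s + k + 1) ` S")
      case True then show ?thesis using kN by auto
    next
      case False then have "x \<in> {M + k + 2 .. M + N - 1}" using xX X_def by auto
      then have "M + k + 1 \<le> x \<and> x \<le> M + N - 1" by auto
      then show ?thesis using MS by blast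
    qed
    then obtain s where sS: "s \<in> S" and sx1: "s + k + 1 \<le> x" and sx2: "x \<le> s + N - 1" by blast
    have sk: "s \<le> k" using sS Sk by auto
    have x2N: "x < 2 * N" using sx2 sk kN by linarith
    have "(x mod N + N - s) mod N = x - s"
    proof (cases "x < N")
      case True
      then have "x mod N + N - s = (x - s) + N" using sx1 by simp
      then show ?thesis using sx2 sx1 True kN
        by (simp add: le_mod_geq)
    next
      case False
      then have "x mod N = x - N" using mod_window[OF x2N] by simp
      then have "x mod N + N - s = x - s" using False by simp
      then show ?thesis using sx2 kN by simp
    qed
    moreover have "(x mod N + N - s) mod N \<le> k" using inc sS wT by blast
    ultimately show False using sx1 by linarith
  qed
  have "card (W \<union> T) \<le> card {..<N::nat}"
    by (rule card_mono) (use WN TN in auto)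
  moreover have "card (W \<union> T) = card W + card T"
    using WT WN TN by (intro card_Un_disjoint) (auto intro: finite_subset)
  ultimately show ?thesis using cardW cardX kN by simp
qed

lemma key2:
  fixes N k :: nat and S T :: "nat set"
  assumes kN: "k + 2 \<le> N" and SN: "S \<subseteq> {..<N}" and TN: "T \<subseteq> {..<N}"
    and Sne: "S \<noteq> {}" and Tne: "T \<noteq> {}"
    and inc: "\<forall>p\<in>S. \<forall>j\<in>T. (j + N - p) mod N \<le> k"
  shows "card S + card T \<le> k + 2"
proof -
  obtain j0 where j0: "j0 \<in> T" using Tne by auto
  have j0N: "j0 < N" using j0 TN by auto
  define q where "q = (j0 + N - k) mod N"
  have qN: "q < N" using kN q_def by simp
  define r where "r = (\<lambda>x. (x + N - q) mod N)"
  have injr: "inj_on r {..<N}"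
  proof (rule inj_onI)
    fix a b assume a: "a \<in> {..<N}" and b: "b \<in> {..<N}" and e: "r a = r b"
    have "(r a + N - r b) mod N = (a + N - b) mod N"
      unfolding r_def using rot_inv[of b N a q] a b qN by simp
    then have "(a + N - b) mod N = 0" using e kN by simp
    then show "a = b" using a b
      by (cases "a < b") (auto simp: le_mod_geq mod_less)
  qed
  have rN: "r ` A \<subseteq> {..<N}" for A using kN unfolding r_def by auto
  have rinv: "\<And>p j. p < N \<Longrightarrow> j < N \<Longrightarrow> (r j + N - r p) mod N = (j + N - p) mod N"
    unfolding r_def using rot_inv qN by simp
  have rj0: "r j0 = k"
  proof -
    have "int (r j0) = (int j0 + int N - int q) mod int N"
      unfolding r_def using qN by (simp add: of_nat_mod of_nat_diff)
    also have "\<dots> = (int j0 + int N - (int j0 + int N - int k) mod int N) mod int N"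
      unfolding q_def using j0N kN by (simp add: of_nat_mod of_nat_diff)
    also have "\<dots> = (int j0 + int N - (int j0 + int N - int k)) mod int N"
      by (metis mod_diff_right_eq)
    also have "\<dots> = int k" using kN by simp
    finally show ?thesis by simp
  qed
  have "card (r ` S) + card (r ` T) \<le> k + 2"
  proof (rule key1[OF kN rN rN])
    show "r ` S \<noteq> {}" using Sne by simp
    show "k \<in> r ` T" using rj0 j0 by force
    show "\<forall>p\<in>r ` S. \<forall>j\<in>r ` T. (j + N - p) mod N \<le> k"
      using inc rinv SN TN by fastforce
  qed
  moreover have "card (r ` S) = card S" using inj_on_subset[OF injr SN] card_image by blast
  moreover have "card (r ` T) = card T" using inj_on_subset[OF injr TN] card_image by blast
  ultimately show ?thesis by simp
qed

theorem proposition3p1: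
  fixes n k :: nat and R :: "(elt \<times> elt) set" and x :: "nat \<Rightarrow> elt"
  assumes "n \<ge> 3"
    and "maximal_reversible n k R"
    and "consistent_labeling n k R x"
  shows "\<forall>i\<in>{1..k+1}. card (Bset (x i) R) \<le> k + 2 - i"
proof
  fix i assume i: "i \<in> {1..k+1}"
  define N where "N = n + k"
  have RInc: "R \<subseteq> Inc n k" using assms(2) unfolding maximal_reversible_def reversible_def by blast
  have bij: "bij_betw x {1..k+1} (Aset n k R)"
    and chain: "\<forall>\<alpha>\<in>{1..k+1}. \<forall>\<beta>\<in>{1..k+1}. \<alpha> < \<beta> \<longrightarrow> Bset (x \<beta>) R \<subseteq> Bset (x \<alpha>) R"
    using assms(3) unfolding consistent_labeling_def by auto
  define S where "S = {p. Aelt p \<in> x ` {1..i}}"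
  define T where "T = {j. Belt j \<in> Bset (x i) R}"
  have sub: "{1..i} \<subseteq> {1..k+1}" using i by auto
  have xA: "x ` {1..i} \<subseteq> Aset n k R" using bij sub by (auto simp: bij_betw_def)
  have SN: "S \<subseteq> {..<N}" using xA unfolding S_def Aset_def N_def by auto
  have "x ` {1..i} = Aelt ` S"
  proof
    show "x ` {1..i} \<subseteq> Aelt ` S"
    proof
      fix y assume y: "y \<in> x ` {1..i}"
      then obtain p where "y = Aelt p" using xA unfolding Aset_def by blast
      then show "y \<in> Aelt ` S" using y unfolding S_def by blast
    qed
    show "Aelt ` S \<subseteq> x ` {1..i}" unfolding S_def by blast
  qed
  then have "card S = i"
    using bij sub card_image[of Aelt S] card_image[of x "{1..i}"]
    by (auto simp: bij_betw_def inj_on_def dest: inj_on_subset)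
  have Bsub: "Bset (x i) R = Belt ` T"
    using RInc unfolding T_def Bset_def Inc_def by auto
  have TN: "T \<subseteq> {..<N}"
    using RInc unfolding T_def Bset_def Inc_def N_def by auto
  have cardB: "card (Bset (x i) R) = card T"
    using Bsub card_image[of Belt T] by (simp add: inj_on_def)
  show "card (Bset (x i) R) \<le> k + 2 - i"
  proof (cases "T = {}")
    case True then show ?thesis using cardB by simp
  next
    case False
    have Sne: "S \<noteq> {}" using \<open>card S = i\<close> i by auto
    have inc: "\<forall>p\<in>S. \<forall>j\<in>T. (j + N - p) mod N \<le> k"
    proof (intro ballI)
      fix p j assume pS: "p \<in> S" and jT: "j \<in> T"
      obtain a where a: "a \<in> {1..i}" "x a = Aelt p" using pS unfolding S_def by auto
      have "Bset (x i) R \<subseteq> Bset (x a) R"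
      proof (cases "a = i")
        case True then show ?thesis by simp
      next
        case False
        then have ai: "a < i" using a by auto
        have aK: "a \<in> {1..k+1}" using a sub by auto
        show ?thesis using chain aK i ai by blast
      qed
      then have "(Aelt p, Belt j) \<in> R" using jT a unfolding T_def Bset_def by auto
      then have "(Aelt p, Belt j) \<in> Inc n k" using RInc by auto
      then show "(j + N - p) mod N \<le> k" unfolding Inc_def crown_inc_def N_def by auto
    qed
    have "card S + card T \<le> k + 2"
      by (rule key2[OF _ SN TN Sne False inc]) (use assms(1) N_def in simp)
    then show ?thesis using cardB \<open>card S = i\<close> by simp
  qed
qed

end
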